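(* Let $\theta\in\Theta\subseteq\mathbb{R}$ and let the data $\mathbf X\in\mathbb{R}^n$ be generated by $\mathbf X=\mathbf G(\mathbf U,\theta)$, where $\mathbf U$ is a random variable whose distribution does not depend on $\theta$. Assume there is a one-to-one $C^1$ transformation $\mathbf X\mapsto(S(\mathbf X),\mathbf A(\mathbf X))$ with $S(\mathbf X)$ real-valued and $\mathbf A(\mathbf X)$ an $(n-1)$-dimensional vector of ancillary statistics, in the sense that $\mathbf A(\mathbf G(\mathbf U,\theta))$ does not depend on $\theta$. Set $G_S(\mathbf u,\theta)=S(\mathbf G(\mathbf u,\theta))$ and $\mathbf G_{\mathbf A}(\mathbf u)=\mathbf A(\mathbf G(\mathbf u,\theta))$, so that $s=G_S(\mathbf U,\theta)$, $\mathbf a=\mathbf G_{\mathbf A}(\mathbf U)$. Let $Q_s(\mathbf u)=\{\theta: s=G_S(\mathbf u,\theta)\}$, let $\mathbf U^\star_{\mathbf a}$ have the conditional distribution of $\mathbf U$ given $\mathbf G_{\mathbf A}(\mathbf U)=\mathbf a$, and let $F_{S\mid\mathbf a}(\cdot,\theta)$ be the conditional distribution function of $S(\mathbf X)$ given $\mathbf A(\mathbf X)=\mathbf a$. Suppose (1) for every $\mathbf u$, $\theta\mapsto G_S(\mathbf u,\theta)$ is non-decreasing, and (2) for every $\mathbf u$ and $s$, $Q_s(\mathbf u)\neq\emptyset$. Then $Q_s(\mathbf u)$ is an interval with endpoints $Q^-_s(\mathbf u)\le Q^+_s(\mathbf u)$, and for any $s_0,\theta_0$, $$P\big(Q^+_{s_0}(\mathbf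 U^\star_{\mathbf a})\le\theta_0\big)=1-\lim_{\epsilon\downarrow0}F_{S\mid\mathbf a}(s_0,\theta_0+\epsilon),\qquad P\big(Q^-_{s_0}(\mathbf U^\star_{\mathbf a})\le\theta_0\big)=1-\lim_{\epsilon\downarrow0}F_{S\mid\mathbf a}(s_0-\epsilon,\theta_0).$$ If moreover (3) for all $\theta_0,s_0$, $F_{S\mid\mathbf a}(s_0,\theta_0)-\lim_{\epsilon\downarrow0}F_{S\mid\mathbf a}(s_0-\epsilon,\theta_0)=0$, then $F_{S\mid\mathbf a}(s,\theta)$ is continuous in $\theta$, $Q^+_{s_0}(\mathbf U^\star_{\mathbf a})=Q^-_{s_0}(\mathbf U^\star_{\mathbf a})$ almost surely, and $P\big(Q_{s_0}(\mathbf U^\star_{\mathbf a})\le\theta_0\big)=1-F_{S\mid\mathbf a}(s_0,\theta_0)$.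
   Context: When $P(Q_s(\mathbf U)\neq\emptyset)=1$, the generalized fiducial distribution of $\theta$ given observed $(s,\mathbf a)$ is the distribution of $Q_s(\mathbf U^\star_{\mathbf a})$. *)

theory Defs
  imports "HOL-Probability.Probability"
begin

definition is_reg_cond_distr ::
  "'a measure \<Rightarrow> 'u measure \<Rightarrow> 'b measure \<Rightarrow> ('a \<Rightarrow> 'u) \<Rightarrow> ('u \<Rightarrow> 'b) \<Rightarrow> ('b \<Rightarrow> 'u measure) \<Rightarrow> bool"
  where
  "is_reg_cond_distr M N K U GA \<kappa> \<longleftrightarrow>
     (\<forall>b\<in>space K. prob_space (\<kappa> b) \<and> sets (\<kappa> b) = sets N) \<and>
     (\<forall>B\<in>sets N. (\<lambda>b. emeasure (\<kappa> b) B) \<in> borel_measurable K) \<and>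
     (\<forall>B\<in>sets N. \<forall>C\<in>sets K.
        emeasure M {\<omega>\<in>space M. U \<omega> \<in> B \<and> GA (U \<omega>) \<in> C}
        = (\<integral>\<^sup>+ b. indicator C b * emeasure (\<kappa> b) B \<partial>(distr M K (\<lambda>\<omega>. GA (U \<omega>)))))"

text \<open>Conditional distribution function of \<open>S(X) = GS(U,\<theta>)\<close> given \<open>A(X) = a\<close>, where
  \<open>\<nu>\<close> is the conditional law of \<open>U\<close> given \<open>GA(U) = a\<close> (the law of \<open>U*_a\<close>).\<close>
definition cond_cdf :: "'u measure \<Rightarrow> ('u \<Rightarrow> real \<Rightarrow> real) \<Rightarrow> real \<Rightarrow> real \<Rightarrow> real" where
  "cond_cdf \<nu> GS s \<theta> = measure \<nu> {u\<in>space \<nu>. GS u \<theta> \<le> s}"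

definition Qset :: "('u \<Rightarrow> real \<Rightarrow> real) \<Rightarrow> real \<Rightarrow> 'u \<Rightarrow> real set" where
  "Qset GS s u = {\<theta>. s = GS u \<theta>}"

definition Qminus :: "('u \<Rightarrow> real \<Rightarrow> real) \<Rightarrow> real \<Rightarrow> 'u \<Rightarrow> real" where
  "Qminus GS s u = Inf (Qset GS s u)"

definition Qplus :: "('u \<Rightarrow> real \<Rightarrow> real) \<Rightarrow> real \<Rightarrow> 'u \<Rightarrow> real" where
  "Qplus GS s u = Sup (Qset GS s u)"

end

theory Submission
  imports Defs
begin

lemma ms_bdd:
  fixes f :: "real \<Rightarrow> real"
  assumes m: "mono f" and s: "\<And>s. \<exists>t. f t = s"
  shows "bdd_above {\<theta>. s = f \<theta>}" "bdd_below {\<theta>. s = f \<theta>}"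
proof -
  obtain t where t: "f t = s + 1" using s by blast
  have "\<theta> \<le> t" if "s = f \<theta>" for \<theta>
  proof (rule ccontr)
    assume "\<not> \<theta> \<le> t" then have "f t \<le> f \<theta>" using m by (simp add: mono_def)
    then show False using t that by simp
  qed
  then show "bdd_above {\<theta>. s = f \<theta>}" by (intro bdd_aboveI[of _ t]) auto
  obtain t where t: "f t = s - 1" using s by blast
  have "t \<le> \<theta>" if "s = f \<theta>" for \<theta>
  proof (rule ccontr)
    assume "\<not> t \<le> \<theta>" then have "f \<theta> \<le> f t" using m by (simp add: mono_def)
    then show False using t that by simp
  qed
  then show "bdd_below {\<theta>. s = f \<theta>}" by (intro bdd_belowI[of _ t]) auto
qed

lemma ms_Sup:
  fixes f :: "real \<Rightarrow> real"
  assumes m: "mono f" and s: "\<And>s. \<exists>t. f t = s"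
  shows "f (Sup {\<theta>. s = f \<theta>}) = s"
proof -
  let ?Q = "{\<theta>. s = f \<theta>}" let ?p = "Sup ?Q"
  have ne: "?Q \<noteq> {}" using s[of s] by auto
  have bdd: "bdd_above ?Q" by (rule ms_bdd[OF m s])
  obtain q where q: "f q = s" using s by blast
  have "q \<le> ?p" by (rule cSup_upper[OF _ bdd]) (use q in simp)
  then have "f q \<le> f ?p" by (rule monoD[OF m])
  then have ge: "s \<le> f ?p" using q by simp
  have lt: "f \<theta> \<le> s" if "\<theta> < ?p" for \<theta>
  proof -
    have "\<exists>r\<in>?Q. \<theta> < r" by (rule iffD1[OF less_cSup_iff[OF ne bdd] that])
    then obtain r where r: "r \<in> ?Q" "\<theta> < r" ..
    then have "f \<theta> \<le> f r" by (intro monoD[OF m]) simp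
    then show ?thesis using r by simp
  qed
  show ?thesis
  proof (rule ccontr)
    assume "f ?p \<noteq> s"
    with ge have gt: "s < f ?p" by simp
    obtain t where t: "f t = (s + f ?p) / 2" using s by blast
    show False
    proof (cases "t < ?p")
      case True then show False using lt[OF True] t gt by simp
    next
      case False then have "f ?p \<le> f t" by (intro monoD[OF m]) simp
      then show False using t gt by simp
    qed
  qed
qed

lemma ms_Inf:
  fixes f :: "real \<Rightarrow> real"
  assumes m: "mono f" and s: "\<And>s. \<exists>t. f t = s"
  shows "f (Inf {\<theta>. s = f \<theta>}) = s"
proof -
  let ?Q = "{\<theta>. s = f \<theta>}" let ?p = "Inf ?Q"
  have ne: "?Q \<noteq> {}" using s[of s] by auto
  have bdd: "bdd_below ?Q" by (rule ms_bdd[OF m s])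
  obtain q where q: "f q = s" using s by blast
  have "?p \<le> q" by (rule cInf_lower[OF _ bdd]) (use q in simp)
  then have "f ?p \<le> f q" by (rule monoD[OF m])
  then have ge: "f ?p \<le> s" using q by simp
  have lt: "s \<le> f \<theta>" if "?p < \<theta>" for \<theta>
  proof -
    have "\<exists>r\<in>?Q. r < \<theta>" by (rule iffD1[OF cInf_less_iff[OF ne bdd] that])
    then obtain r where r: "r \<in> ?Q" "r < \<theta>" ..
    then have "f r \<le> f \<theta>" by (intro monoD[OF m]) simp
    then show ?thesis using r by simp
  qed
  show ?thesis
  proof (rule ccontr)
    assume "f ?p \<noteq> s"
    with ge have gt: "f ?p < s" by simp
    obtain t where t: "f t = (s + f ?p) / 2" using s by blast
    show False
    proof (cases "?p < t")
      case True then show False using lt[OF True] t gt by simp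
    next
      case False then have "f t \<le> f ?p" by (intro monoD[OF m]) simp
      then show False using t gt by simp
    qed
  qed
qed

lemma ms_le:
  fixes f :: "real \<Rightarrow> real"
  assumes m: "mono f" and s: "\<And>s. \<exists>t. f t = s"
  shows "f \<theta> \<le> s \<longleftrightarrow> \<theta> \<le> Sup {\<theta>. s = f \<theta>}"
proof
  assume "\<theta> \<le> Sup {\<theta>. s = f \<theta>}"
  then have "f \<theta> \<le> f (Sup {\<theta>. s = f \<theta>})" by (rule monoD[OF m])
  then show "f \<theta> \<le> s" using ms_Sup[OF m s, of s] by simp
next
  assume h: "f \<theta> \<le> s"
  show "\<theta> \<le> Sup {\<theta>. s = f \<theta>}"
  proof (rule ccontr)
    assume nt: "\<not> ?thesis"
    then have "Sup {\<theta>. s = f \<theta>} \<le> \<theta>" by simp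
    then have "f (Sup {\<theta>. s = f \<theta>}) \<le> f \<theta>" by (rule monoD[OF m])
    then have "s \<le> f \<theta>" using ms_Sup[OF m s, of s] by simp
    then have "\<theta> \<in> {\<theta>. s = f \<theta>}" using h by simp
    then have "\<theta> \<le> Sup {\<theta>. s = f \<theta>}" by (rule cSup_upper[OF _ ms_bdd(1)[OF m s, of s]])
    then show False using nt by simp
  qed
qed

lemma ms_less:
  fixes f :: "real \<Rightarrow> real"
  assumes m: "mono f" and s: "\<And>s. \<exists>t. f t = s"
  shows "f \<theta> < s \<longleftrightarrow> \<theta> < Inf {\<theta>. s = f \<theta>}"
proof
  assume "\<theta> < Inf {\<theta>. s = f \<theta>}"
  then have "f \<theta> \<le> f (Inf {\<theta>. s = f \<theta>})" by (intro monoD[OF m]) simp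
  then have "f \<theta> \<le> s" using ms_Inf[OF m s, of s] by simp
  moreover have "f \<theta> \<noteq> s"
  proof
    assume "f \<theta> = s" then have "\<theta> \<in> {\<theta>. s = f \<theta>}" by simp
    then have "Inf {\<theta>. s = f \<theta>} \<le> \<theta>" by (rule cInf_lower[OF _ ms_bdd(2)[OF m s, of s]])
    then show False using \<open>\<theta> < _\<close> by simp
  qed
  ultimately show "f \<theta> < s" by simp
next
  assume h: "f \<theta> < s"
  show "\<theta> < Inf {\<theta>. s = f \<theta>}"
  proof (rule ccontr)
    assume "\<not> ?thesis"
    then have "Inf {\<theta>. s = f \<theta>} \<le> \<theta>" by simp
    then have "f (Inf {\<theta>. s = f \<theta>}) \<le> f \<theta>" by (rule monoD[OF m])
    then have "s \<le> f \<theta>" using ms_Inf[OF m s, of s] by simp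
    then show False using h by simp
  qed
qed


lemma filt_plus: "filterlim (\<lambda>e. x + e) (at_right x) (at_right (0::real))"
proof -
  have "((\<lambda>e. x + e) \<longlongrightarrow> x + 0) (at_right (0::real))"
    by (intro tendsto_intros)
  moreover have "eventually (\<lambda>e. x + e \<in> {x<..} \<and> x + e \<noteq> x) (at_right (0::real))"
    by (simp add: eventually_at_filter)
  ultimately show ?thesis by (simp add: filterlim_at)
qed

lemma filt_minus: "filterlim (\<lambda>e. x - e) (at_left x) (at_right (0::real))"
proof -
  have "((\<lambda>e. x - e) \<longlongrightarrow> x - 0) (at_right (0::real))"
    by (intro tendsto_intros)
  moreover have "eventually (\<lambda>e. x - e \<in> {..<x} \<and> x - e \<noteq> x) (at_right (0::real))"
    by (simp add: eventually_at_filter)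
  ultimately show ?thesis by (simp add: filterlim_at)
qed


lemma main:
  fixes \<nu> :: "'u measure" and F :: "'u \<Rightarrow> real \<Rightarrow> real"
  assumes P: "prob_space \<nu>" and Fm: "\<And>\<theta>. (\<lambda>u. F u \<theta>) \<in> borel_measurable \<nu>"
    and mono: "\<And>u. mono (F u)" and ne: "\<And>u s. Qset F s u \<noteq> {}"
  shows
    "(\<forall>s u. is_interval (Qset F s u)
            \<and> bdd_below (Qset F s u)
            \<and> bdd_above (Qset F s u)
            \<and> Qminus F s u \<le> Qplus F s u)
     \<and> (\<forall>s0 \<theta>0.
          ((\<lambda>\<epsilon>. cond_cdf \<nu> F s0 (\<theta>0 + \<epsilon>))
             \<longlongrightarrow> 1 - measure \<nu> {u\<in>space \<nu>. Qplus F s0 u \<le> \<theta>0})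
            (at_right 0)
        \<and> ((\<lambda>\<epsilon>. cond_cdf \<nu> F (s0 - \<epsilon>) \<theta>0)
             \<longlongrightarrow> 1 - measure \<nu> {u\<in>space \<nu>. Qminus F s0 u \<le> \<theta>0})
            (at_right 0))
     \<and> ((\<forall>\<theta>0 s0. cond_cdf \<nu> F s0 \<theta>0
                   - Lim (at_right 0) (\<lambda>\<epsilon>. cond_cdf \<nu> F (s0 - \<epsilon>) \<theta>0) = 0)
        \<longrightarrow> (\<forall>s. continuous_on UNIV (\<lambda>\<theta>. cond_cdf \<nu> F s \<theta>))
          \<and> (\<forall>s0. AE u in \<nu>. Qplus F s0 u = Qminus F s0 u)
          \<and> (\<forall>s0 \<theta>0. measure \<nu> {u\<in>space \<nu>. Qset F s0 u \<subseteq> {..\<theta>0}}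
                      = 1 - cond_cdf \<nu> F s0 \<theta>0))"
proof -
  interpret prob_space \<nu> by (rule P)
  have Fm'[measurable]: "\<And>\<theta>. (\<lambda>u. F u \<theta>) \<in> borel_measurable \<nu>" by (rule Fm)
  have surj: "\<exists>t. F u t = s" for u s
  proof -
    have "{\<theta>. s = F u \<theta>} \<noteq> {}" using ne[of s u] by (simp add: Qset_def)
    then show ?thesis by auto
  qed
  have Qs: "Qset F s u = {\<theta>. s = F u \<theta>}" for s u by (simp add: Qset_def)
  have Qp: "Qplus F s u = Sup {\<theta>. s = F u \<theta>}" for s u by (simp add: Qplus_def Qset_def)
  have Qm: "Qminus F s u = Inf {\<theta>. s = F u \<theta>}" for s u by (simp add: Qminus_def Qset_def)
  have le: "F u \<theta> \<le> s \<longleftrightarrow> \<theta> \<le> Qplus F s u" for u \<theta> s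
    unfolding Qp by (rule ms_le[OF mono surj])
  have less: "F u \<theta> < s \<longleftrightarrow> \<theta> < Qminus F s u" for u \<theta> s
    unfolding Qm by (rule ms_less[OF mono surj])
  have atp: "F u (Qplus F s u) = s" for u s
    unfolding Qp by (rule ms_Sup[OF mono surj])
  have atm: "F u (Qminus F s u) = s" for u s
    unfolding Qm by (rule ms_Inf[OF mono surj])
  have bdd: "bdd_above (Qset F s u)" "bdd_below (Qset F s u)" for s u
    unfolding Qs by (rule ms_bdd[OF mono surj])+

  have part1: "\<forall>s u. is_interval (Qset F s u) \<and> bdd_below (Qset F s u) \<and> bdd_above (Qset F s u)
            \<and> Qminus F s u \<le> Qplus F s u"
  proof (intro allI conjI)
    fix s u
    show "is_interval (Qset F s u)"
      unfolding is_interval_1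
    proof (intro ballI allI impI)
      fix a b x assume ab: "a \<in> Qset F s u" "b \<in> Qset F s u" and x: "a \<le> x \<and> x \<le> b"
      have "F u a \<le> F u x" "F u x \<le> F u b" using x by (auto intro: monoD[OF mono])
      then show "x \<in> Qset F s u" using ab unfolding Qs by simp
    qed
    show "bdd_below (Qset F s u)" "bdd_above (Qset F s u)" by (rule bdd)+
    show "Qminus F s u \<le> Qplus F s u"
      unfolding Qminus_def Qplus_def by (rule cInf_le_cSup[OF ne bdd(1) bdd(2)])
  qed

  have Qp_meas[measurable]: "(\<lambda>u. Qplus F s u) \<in> borel_measurable \<nu>" for s
  proof (rule borel_measurableI_ge)
    fix y
    have "{u \<in> space \<nu>. y \<le> Qplus F s u} = {u \<in> space \<nu>. F u y \<le> s}" using le by blast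
    also have "\<dots> \<in> sets \<nu>" by measurable
    finally show "{u \<in> space \<nu>. y \<le> Qplus F s u} \<in> sets \<nu>" .
  qed
  have Qm_meas[measurable]: "(\<lambda>u. Qminus F s u) \<in> borel_measurable \<nu>" for s
  proof (rule borel_measurableI_greater)
    fix y
    have "{u \<in> space \<nu>. y < Qminus F s u} = {u \<in> space \<nu>. F u y < s}" using less by blast
    also have "\<dots> \<in> sets \<nu>" by measurable
    finally show "{u \<in> space \<nu>. y < Qminus F s u} \<in> sets \<nu>" .
  qed

  define Dp where "Dp s = distr \<nu> borel (\<lambda>u. Qplus F s u)" for s
  define Dt where "Dt \<theta> = distr \<nu> borel (\<lambda>u. F u \<theta>)" for \<theta>
  have rDp: "real_distribution (Dp s)" for s unfolding Dp_def by simp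
  have rDt: "real_distribution (Dt \<theta>)" for \<theta> unfolding Dt_def by simp
  have mDp: "measure (Dp s) A = measure \<nu> {u\<in>space \<nu>. Qplus F s u \<in> A}" if "A \<in> sets borel" for s A
    unfolding Dp_def by (subst measure_distr) (auto simp: that intro!: arg_cong[where f="measure \<nu>"])
  have mDt: "measure (Dt \<theta>) A = measure \<nu> {u\<in>space \<nu>. F u \<theta> \<in> A}" if "A \<in> sets borel" for \<theta> A
    unfolding Dt_def by (subst measure_distr) (auto simp: that intro!: arg_cong[where f="measure \<nu>"])

  have cc_Dt: "cond_cdf \<nu> F s \<theta> = cdf (Dt \<theta>) s" for s \<theta>
    unfolding cond_cdf_def cdf_def by (subst mDt) auto
  have cc_p: "cond_cdf \<nu> F s \<theta> = measure \<nu> {u\<in>space \<nu>. \<theta> \<le> Qplus F s u}" for s \<theta>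
    unfolding cond_cdf_def using le by (intro arg_cong[where f="measure \<nu>"]) blast
  have compl: "measure \<nu> {u\<in>space \<nu>. P u} = 1 - measure \<nu> {u\<in>space \<nu>. \<not> P u}"
    if "{u\<in>space \<nu>. P u} \<in> sets \<nu>" for P
  proof -
    have "{u\<in>space \<nu>. P u} = space \<nu> - {u\<in>space \<nu>. \<not> P u}" by blast
    moreover have "{u\<in>space \<nu>. \<not> P u} \<in> sets \<nu>"
    proof -
      have "{u\<in>space \<nu>. \<not> P u} = space \<nu> - {u\<in>space \<nu>. P u}" by blast
      then show ?thesis using that by auto
    qed
    ultimately show ?thesis using prob_compl by simp
  qed
  have cc_p2: "cond_cdf \<nu> F s \<theta> = 1 - measure (Dp s) {..<\<theta>}" for s \<theta>
  proof -
    have "cond_cdf \<nu> F s \<theta> = 1 - measure \<nu> {u\<in>space \<nu>. \<not> \<theta> \<le> Qplus F s u}"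
      unfolding cc_p by (rule compl) measurable
    also have "\<dots> = 1 - measure (Dp s) {..<\<theta>}" by (subst mDp) (auto simp: not_le)
    finally show ?thesis .
  qed

  have part2: "\<forall>s0 \<theta>0.
          ((\<lambda>\<epsilon>. cond_cdf \<nu> F s0 (\<theta>0 + \<epsilon>))
             \<longlongrightarrow> 1 - measure \<nu> {u\<in>space \<nu>. Qplus F s0 u \<le> \<theta>0}) (at_right 0)
        \<and> ((\<lambda>\<epsilon>. cond_cdf \<nu> F (s0 - \<epsilon>) \<theta>0)
             \<longlongrightarrow> 1 - measure \<nu> {u\<in>space \<nu>. Qminus F s0 u \<le> \<theta>0}) (at_right 0)"
  proof (intro allI conjI)
    fix s0 \<theta>0
    interpret D: real_distribution "Dp s0" by (rule rDp)
    have rc: "(cdf (Dp s0) \<longlongrightarrow> cdf (Dp s0) \<theta>0) (at_right \<theta>0)"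
      using D.cdf_is_right_cont[of \<theta>0] by (simp add: continuous_within)
    have up: "((\<lambda>e. cdf (Dp s0) (\<theta>0 + e)) \<longlongrightarrow> cdf (Dp s0) \<theta>0) (at_right 0)"
      by (rule filterlim_compose[OF rc filt_plus])
    have lo: "((\<lambda>e. cdf (Dp s0) \<theta>0) \<longlongrightarrow> cdf (Dp s0) \<theta>0) (at_right 0)" by simp
    have "((\<lambda>e. measure (Dp s0) {..<\<theta>0 + e}) \<longlongrightarrow> cdf (Dp s0) \<theta>0) (at_right 0)"
    proof (rule tendsto_sandwich[OF _ _ lo up])
      show "\<forall>\<^sub>F e in at_right 0. cdf (Dp s0) \<theta>0 \<le> measure (Dp s0) {..<\<theta>0 + e}"
        unfolding eventually_at_filter
        by (intro always_eventually allI impI, unfold cdf_def, rule D.finite_measure_mono) auto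
      show "\<forall>\<^sub>F e in at_right 0. measure (Dp s0) {..<\<theta>0 + e} \<le> cdf (Dp s0) (\<theta>0 + e)"
        unfolding cdf_def
        by (intro always_eventually allI impI, rule D.finite_measure_mono) auto
    qed
    then have "((\<lambda>e. 1 - measure (Dp s0) {..<\<theta>0 + e}) \<longlongrightarrow> 1 - cdf (Dp s0) \<theta>0) (at_right 0)"
      by (intro tendsto_intros)
    moreover have "cdf (Dp s0) \<theta>0 = measure \<nu> {u\<in>space \<nu>. Qplus F s0 u \<le> \<theta>0}"
      unfolding cdf_def by (subst mDp) auto
    ultimately show "((\<lambda>\<epsilon>. cond_cdf \<nu> F s0 (\<theta>0 + \<epsilon>))
             \<longlongrightarrow> 1 - measure \<nu> {u\<in>space \<nu>. Qplus F s0 u \<le> \<theta>0}) (at_right 0)"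
      by (simp add: cc_p2)
  next
    fix s0 \<theta>0
    interpret D: real_distribution "Dt \<theta>0" by (rule rDt)
    have "((\<lambda>e. cdf (Dt \<theta>0) (s0 - e)) \<longlongrightarrow> measure (Dt \<theta>0) {..<s0}) (at_right 0)"
      by (rule filterlim_compose[OF D.cdf_at_left filt_minus])
    moreover have "measure (Dt \<theta>0) {..<s0} = 1 - measure \<nu> {u\<in>space \<nu>. Qminus F s0 u \<le> \<theta>0}"
    proof -
      have "measure (Dt \<theta>0) {..<s0} = measure \<nu> {u\<in>space \<nu>. \<theta>0 < Qminus F s0 u}"
        by (subst mDt) (auto simp: less)
      also have "\<dots> = 1 - measure \<nu> {u\<in>space \<nu>. \<not> \<theta>0 < Qminus F s0 u}"
        by (rule compl) measurable
      finally show ?thesis by (simp add: not_less)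
    qed
    ultimately show "((\<lambda>\<epsilon>. cond_cdf \<nu> F (s0 - \<epsilon>) \<theta>0)
             \<longlongrightarrow> 1 - measure \<nu> {u\<in>space \<nu>. Qminus F s0 u \<le> \<theta>0}) (at_right 0)"
      by (simp add: cc_Dt)
  qed

  have leftlim: "((\<lambda>e. cond_cdf \<nu> F (s - e) \<theta>) \<longlongrightarrow> measure (Dt \<theta>) {..<s}) (at_right 0)" for s \<theta>
  proof -
    interpret D: real_distribution "Dt \<theta>" by (rule rDt)
    show ?thesis unfolding cc_Dt by (rule filterlim_compose[OF D.cdf_at_left filt_minus])
  qed
  have part3: "(\<forall>\<theta>0 s0. cond_cdf \<nu> F s0 \<theta>0
                   - Lim (at_right 0) (\<lambda>\<epsilon>. cond_cdf \<nu> F (s0 - \<epsilon>) \<theta>0) = 0)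
        \<longrightarrow> (\<forall>s. continuous_on UNIV (\<lambda>\<theta>. cond_cdf \<nu> F s \<theta>))
          \<and> (\<forall>s0. AE u in \<nu>. Qplus F s0 u = Qminus F s0 u)
          \<and> (\<forall>s0 \<theta>0. measure \<nu> {u\<in>space \<nu>. Qset F s0 u \<subseteq> {..\<theta>0}}
                      = 1 - cond_cdf \<nu> F s0 \<theta>0)"
  proof (intro impI)
    assume H: "\<forall>\<theta>0 s0. cond_cdf \<nu> F s0 \<theta>0
                   - Lim (at_right 0) (\<lambda>\<epsilon>. cond_cdf \<nu> F (s0 - \<epsilon>) \<theta>0) = 0"
    have Z: "measure \<nu> {u\<in>space \<nu>. F u \<theta> = s} = 0" for \<theta> s
    proof -
      interpret D: real_distribution "Dt \<theta>" by (rule rDt)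
      have "Lim (at_right 0) (\<lambda>\<epsilon>. cond_cdf \<nu> F (s - \<epsilon>) \<theta>) = measure (Dt \<theta>) {..<s}"
        by (rule tendsto_Lim[OF _ leftlim]) simp
      moreover have "cond_cdf \<nu> F s \<theta> - Lim (at_right 0) (\<lambda>\<epsilon>. cond_cdf \<nu> F (s - \<epsilon>) \<theta>) = 0"
        using H by blast
      ultimately have "measure (Dt \<theta>) {..s} = measure (Dt \<theta>) {..<s}"
        unfolding cc_Dt cdf_def by simp
      moreover have "measure (Dt \<theta>) {..s} = measure (Dt \<theta>) {..<s} + measure (Dt \<theta>) {s}"
        unfolding ivl_disj_un(2)[symmetric] by (subst D.finite_measure_Union) auto
      ultimately have "measure (Dt \<theta>) {s} = 0" by simp
      then show ?thesis by (subst (asm) mDt) auto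
    qed
    have Zp: "measure (Dp s) {\<theta>} = 0" for s \<theta>
    proof -
      have "measure (Dp s) {\<theta>} = measure \<nu> {u\<in>space \<nu>. Qplus F s u = \<theta>}" by (subst mDp) auto
      also have "\<dots> \<le> measure \<nu> {u\<in>space \<nu>. F u \<theta> = s}"
        by (rule finite_measure_mono) (use atp in auto)
      finally have "measure (Dp s) {\<theta>} \<le> 0" using Z[of \<theta> s] by simp
      then show ?thesis using measure_nonneg[of "Dp s" "{\<theta>}"] by linarith
    qed
    have cdfeq: "cond_cdf \<nu> F s \<theta> = 1 - cdf (Dp s) \<theta>" for s \<theta>
    proof -
      interpret D: real_distribution "Dp s" by (rule rDp)
      have "measure (Dp s) {..\<theta>} = measure (Dp s) {..<\<theta>} + measure (Dp s) {\<theta>}"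
        unfolding ivl_disj_un(2)[symmetric] by (subst D.finite_measure_Union) auto
      then show ?thesis using Zp[of s \<theta>] cc_p2[of s \<theta>] by (simp add: cdf_def)
    qed
    have C: "continuous_on UNIV (\<lambda>\<theta>. cond_cdf \<nu> F s \<theta>)" for s
    proof -
      interpret D: real_distribution "Dp s" by (rule rDp)
      have "continuous_on UNIV (\<lambda>\<theta>. 1 - cdf (Dp s) \<theta>)"
        by (intro continuous_at_imp_continuous_on ballI continuous_intros)
           (simp add: D.isCont_cdf Zp)
      then show ?thesis by (simp add: cdfeq)
    qed
    have AE: "AE u in \<nu>. Qplus F s0 u = Qminus F s0 u" for s0
    proof -
      have "AE u in \<nu>. F u (of_rat r) \<noteq> s0" for r
      proof (rule AE_I')
        show "{u\<in>space \<nu>. F u (of_rat r) = s0} \<in> null_sets \<nu>"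
          using Z[of "of_rat r" s0] by (intro null_setsI) (auto simp: emeasure_eq_measure)
      qed auto
      then have "AE u in \<nu>. \<forall>r. F u (of_rat r) \<noteq> s0" by (simp add: AE_all_countable)
      then show ?thesis
      proof (rule AE_mp, intro AE_I2 impI)
        fix u assume nr: "\<forall>r. F u (of_rat r) \<noteq> s0"
        have mp: "Qminus F s0 u \<le> Qplus F s0 u" using part1[rule_format, of s0 u] by simp
        show "Qplus F s0 u = Qminus F s0 u"
        proof (rule ccontr)
          assume "Qplus F s0 u \<noteq> Qminus F s0 u"
          with mp have "Qminus F s0 u < Qplus F s0 u" by simp
          then obtain x where x: "x \<in> \<rat>" "Qminus F s0 u < x" "x < Qplus F s0 u"
            using Rats_dense_in_real by blast
          then obtain r where r: "x = of_rat r" by (auto elim: Rats_cases)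
          have "F u (Qminus F s0 u) \<le> F u x" "F u x \<le> F u (Qplus F s0 u)"
            using x by (auto intro: monoD[OF mono])
          then have "F u x = s0" using atp[of u s0] atm[of u s0] by simp
          then show False using nr r by blast
        qed
      qed
    qed
    have fin: "measure \<nu> {u\<in>space \<nu>. Qset F s0 u \<subseteq> {..\<theta>0}} = 1 - cond_cdf \<nu> F s0 \<theta>0" for s0 \<theta>0
    proof -
      have eq: "Qset F s0 u \<subseteq> {..\<theta>0} \<longleftrightarrow> Qplus F s0 u \<le> \<theta>0" for u
      proof
        assume "Qset F s0 u \<subseteq> {..\<theta>0}"
        moreover have "Qplus F s0 u \<in> Qset F s0 u" using atp unfolding Qs by simp
        ultimately show "Qplus F s0 u \<le> \<theta>0" by auto
      next
        assume h: "Qplus F s0 u \<le> \<theta>0"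
        show "Qset F s0 u \<subseteq> {..\<theta>0}"
        proof
          fix x assume "x \<in> Qset F s0 u"
          then have "x \<le> Qplus F s0 u" unfolding Qplus_def by (rule cSup_upper[OF _ bdd(1)])
          then show "x \<in> {..\<theta>0}" using h by simp
        qed
      qed
      have "measure \<nu> {u\<in>space \<nu>. Qset F s0 u \<subseteq> {..\<theta>0}} = measure \<nu> {u\<in>space \<nu>. Qplus F s0 u \<le> \<theta>0}"
        using eq by simp
      also have "\<dots> = cdf (Dp s0) \<theta>0" unfolding cdf_def by (subst mDp) auto
      finally show ?thesis by (simp add: cdfeq)
    qed
    show "(\<forall>s. continuous_on UNIV (\<lambda>\<theta>. cond_cdf \<nu> F s \<theta>))
          \<and> (\<forall>s0. AE u in \<nu>. Qplus F s0 u = Qminus F s0 u)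
          \<and> (\<forall>s0 \<theta>0. measure \<nu> {u\<in>space \<nu>. Qset F s0 u \<subseteq> {..\<theta>0}}
                      = 1 - cond_cdf \<nu> F s0 \<theta>0)"
      by (intro conjI allI C AE fin)
  qed
  show ?thesis by (intro conjI part1 part2 part3)
qed

theorem corollary1:
  fixes M :: "'w measure" and N :: "'u measure"
    and U :: "'w \<Rightarrow> 'u"
    and G :: "'u \<Rightarrow> real \<Rightarrow> real^'n"
    and S :: "real^'n \<Rightarrow> real" and A :: "real^'n \<Rightarrow> real^'m"
    and T' :: "real^'n \<Rightarrow> ((real^'n) \<Rightarrow>\<^sub>L (real \<times> (real^'m)))"
    and GA :: "'u \<Rightarrow> real^'m"
    and \<kappa> :: "real^'m \<Rightarrow> 'u measure"
    and a :: "real^'m"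
  assumes dim: "CARD('n) = CARD('m) + 1"
    and M: "prob_space M"
    and U: "U \<in> measurable M N"
    and G_meas: "\<And>\<theta>. (\<lambda>u. G u \<theta>) \<in> measurable N borel"
    and T_inj: "inj (\<lambda>x. (S x, A x))"
    and T_deriv: "\<And>x. ((\<lambda>x. (S x, A x)) has_derivative blinfun_apply (T' x)) (at x)"
    and T'_cont: "continuous_on UNIV T'"
    and ancillary: "\<And>u \<theta>. A (G u \<theta>) = GA u"
    and cond: "is_reg_cond_distr M N borel U GA \<kappa>"
    and mono: "\<And>u. mono (\<lambda>\<theta>. S (G u \<theta>))"
    and nonempty: "\<And>u s. Qset (\<lambda>u \<theta>. S (G u \<theta>)) s u \<noteq> {}"
  shows
    "(\<forall>s u. is_interval (Qset (\<lambda>u \<theta>. S (G u \<theta>)) s u)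
            \<and> bdd_below (Qset (\<lambda>u \<theta>. S (G u \<theta>)) s u)
            \<and> bdd_above (Qset (\<lambda>u \<theta>. S (G u \<theta>)) s u)
            \<and> Qminus (\<lambda>u \<theta>. S (G u \<theta>)) s u \<le> Qplus (\<lambda>u \<theta>. S (G u \<theta>)) s u)
     \<and> (\<forall>s0 \<theta>0.
          ((\<lambda>\<epsilon>. cond_cdf (\<kappa> a) (\<lambda>u \<theta>. S (G u \<theta>)) s0 (\<theta>0 + \<epsilon>))
             \<longlongrightarrow> 1 - measure (\<kappa> a) {u\<in>space (\<kappa> a). Qplus (\<lambda>u \<theta>. S (G u \<theta>)) s0 u \<le> \<theta>0})
            (at_right 0)
        \<and> ((\<lambda>\<epsilon>. cond_cdf (\<kappa> a) (\<lambda>u \<theta>. S (G u \<theta>)) (s0 - \<epsilon>) \<theta>0)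
             \<longlongrightarrow> 1 - measure (\<kappa> a) {u\<in>space (\<kappa> a). Qminus (\<lambda>u \<theta>. S (G u \<theta>)) s0 u \<le> \<theta>0})
            (at_right 0))
     \<and> ((\<forall>\<theta>0 s0. cond_cdf (\<kappa> a) (\<lambda>u \<theta>. S (G u \<theta>)) s0 \<theta>0
                   - Lim (at_right 0) (\<lambda>\<epsilon>. cond_cdf (\<kappa> a) (\<lambda>u \<theta>. S (G u \<theta>)) (s0 - \<epsilon>) \<theta>0) = 0)
        \<longrightarrow> (\<forall>s. continuous_on UNIV (\<lambda>\<theta>. cond_cdf (\<kappa> a) (\<lambda>u \<theta>. S (G u \<theta>)) s \<theta>))
          \<and> (\<forall>s0. AE u in \<kappa> a. Qplus (\<lambda>u \<theta>. S (G u \<theta>)) s0 u = Qminus (\<lambda>u \<theta>. S (G u \<theta>)) s0 u)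
          \<and> (\<forall>s0 \<theta>0. measure (\<kappa> a) {u\<in>space (\<kappa> a). Qset (\<lambda>u \<theta>. S (G u \<theta>)) s0 u \<subseteq> {..\<theta>0}}
                      = 1 - cond_cdf (\<kappa> a) (\<lambda>u \<theta>. S (G u \<theta>)) s0 \<theta>0))"
proof -
  have ca: "prob_space (\<kappa> a) \<and> sets (\<kappa> a) = sets N"
    using cond unfolding is_reg_cond_distr_def by simp
  have "isCont (\<lambda>x. (S x, A x)) x" for x
    by (rule has_derivative_continuous[OF T_deriv])
  then have "isCont (\<lambda>x. fst (S x, A x)) x" for x by (rule isCont_fst)
  then have "isCont S x" for x by simp
  then have Sm: "S \<in> borel_measurable borel"
    by (intro borel_measurable_continuous_onI continuous_at_imp_continuous_on) auto
  have Fm: "(\<lambda>u. S (G u \<theta>)) \<in> borel_measurable (\<kappa> a)" for \<theta>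
  proof -
    have "(\<lambda>u. S (G u \<theta>)) \<in> borel_measurable N"
      by (rule measurable_compose[OF G_meas Sm])
    moreover have "measurable (\<kappa> a) (borel :: real measure) = measurable N borel"
      using ca by (intro measurable_cong_sets) auto
    ultimately show ?thesis by simp
  qed
  show ?thesis
    by (rule main[of "\<kappa> a" "\<lambda>u \<theta>. S (G u \<theta>)", OF conjunct1[OF ca] Fm mono nonempty])
qed

end
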